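(* Assume the Setting below. Let $(x_p)\subset\Omega$ be such that $\mu_p^{-2}:=p|u_p(x_p)|^{p-1}\to+\infty$, and assume that the rescaled functions $$v_p(x):=\frac{p}{u_p(x_p)}\left(u_p(x_p+\mu_px)-u_p(x_p)\right)$$ converge to $U(x)=\log\left(\frac{1}{1+\frac18|x|^2}\right)^2$ in $C^1_{loc}\left(\mathbb{R}^2\setminus\{-\lim_p \frac{x_p}{\mu_p}\}\right)$ as $p\to+\infty$. Then $\frac{|x_p|}{\mu_p}\to0$ as $p\to+\infty$. Consequently $v_p\to U$ in $C^1_{loc}(\mathbb{R}^2\setminus\{0\})$.
   Context: Setting: $\Omega\subset\mathbb{R}^2$ is a simply connected bounded smooth domain invariant under a cyclic group $G$ of rotations about the origin $O$, with $|G|\ge 4e$. $(u_p)_{p>1}$ is a family of sign-changing solutions of $-\Delta u=|u|^{p-1}u$ in $\Omega$, $u=0$ on $\partial\Omega$, which are $G$-symmetric ($u_p\circ g=u_p$ for $g\in G$), have exactly two nodal regions, whose nodal line $NL_p:=\{x\in\Omega:u_p(x)=0\}$ satisfies $NL_p\cap\partial\Omega=\emptyset$, $O\notin NL_p$, and with $p\int_\Omega|\nabla u_p|^2\le\alpha\,8\pi e$ for some $\alpha<5$ and $p$ large; $\|u_p\|_\infty=\|u_p^+\|_\infty$. Limits are along a sequence $p\to+\infty$ along which $x_p/\mu_p$ converges. *)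

theory Defs
  imports "HOL-Analysis.Analysis"
begin

text \<open>The plane R^2 is identified with the complex numbers.\<close>

definition vderiv_fun :: "(real \<Rightarrow> complex) \<Rightarrow> real \<Rightarrow> complex" where
  "vderiv_fun g = (\<lambda>t. vector_derivative g (at t))"

text \<open>Smooth boundary of a bounded simply connected planar domain: the boundary is
  a single regular C-infinity simple closed curve.\<close>
definition smooth_boundary :: "complex set \<Rightarrow> bool" where
  "smooth_boundary \<Omega> \<longleftrightarrow> (\<exists>\<gamma> :: real \<Rightarrow> complex.
      (\<forall>t. \<gamma> (t + 1) = \<gamma> t) \<and>
      (\<forall>n t. ((vderiv_fun ^^ n) \<gamma>) differentiable (at t)) \<and>
      (\<forall>t. vector_derivative \<gamma> (at t) \<noteq> 0) \<and>
      inj_on \<gamma> {0..<1} \<and>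
      frontier \<Omega> = \<gamma> ` {0..1})"

definition pdx :: "(complex \<Rightarrow> real) \<Rightarrow> complex \<Rightarrow> real" where
  "pdx f z = deriv (\<lambda>t. f (z + of_real t)) 0"

definition pdy :: "(complex \<Rightarrow> real) \<Rightarrow> complex \<Rightarrow> real" where
  "pdy f z = deriv (\<lambda>t. f (z + \<i> * of_real t)) 0"

definition C2_on :: "complex set \<Rightarrow> (complex \<Rightarrow> real) \<Rightarrow> bool" where
  "C2_on S f \<longleftrightarrow>
     (\<forall>g\<in>{f, pdx f, pdy f}. continuous_on S g \<and> (\<forall>z\<in>S. g differentiable (at z))) \<and>
     (\<forall>g\<in>{pdx (pdx f), pdx (pdy f), pdy (pdx f), pdy (pdy f)}. continuous_on S g)"

definition laplacian :: "(complex \<Rightarrow> real) \<Rightarrow> complex \<Rightarrow> real" where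
  "laplacian f z = pdx (pdx f) z + pdy (pdy f) z"

definition grad_sq :: "(complex \<Rightarrow> real) \<Rightarrow> complex \<Rightarrow> real" where
  "grad_sq f z = (pdx f z)\<^sup>2 + (pdy f z)\<^sup>2"

definition C1loc_conv ::
  "(nat \<Rightarrow> complex \<Rightarrow> real) \<Rightarrow> (nat \<Rightarrow> complex set) \<Rightarrow> (complex \<Rightarrow> real) \<Rightarrow> complex set \<Rightarrow> bool" where
  "C1loc_conv f D g A \<longleftrightarrow>
     (\<forall>K. compact K \<and> K \<subseteq> A \<longrightarrow>
        (\<forall>\<^sub>F n in sequentially. K \<subseteq> D n \<and> (\<forall>z\<in>K. f n differentiable (at z))) \<and>
        (\<forall>e>0. \<forall>\<^sub>F n in sequentially. \<forall>z\<in>K.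
            \<bar>f n z - g z\<bar> < e \<and>
            onorm (\<lambda>h. frechet_derivative (f n) (at z) h - frechet_derivative g (at z) h) < e))"

definition Ububble :: "complex \<Rightarrow> real" where
  "Ububble z = ln ((1 / (1 + (cmod z)\<^sup>2 / 8))\<^sup>2)"

end

theory Submission
  imports Defs
begin

theorem proposition3p8:
  fixes \<Omega> :: "complex set" and k :: nat and u :: "real \<Rightarrow> complex \<Rightarrow> real"
    and p :: "nat \<Rightarrow> real" and x :: "nat \<Rightarrow> complex" and \<mu> :: "nat \<Rightarrow> real"
    and v :: "nat \<Rightarrow> complex \<Rightarrow> real" and L :: complex
  assumes dom: "open \<Omega>" "bounded \<Omega>" "connected \<Omega>" "simply_connected \<Omega>" "smooth_boundary \<Omega>"
    and grp: "real k \<ge> 4 * exp 1"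
    and inv: "(\<lambda>z. cis (2 * pi / real k) * z) ` \<Omega> = \<Omega>"
    and sol: "\<And>q. q > 1 \<Longrightarrow> C2_on \<Omega> (u q) \<and> continuous_on (closure \<Omega>) (u q)
               \<and> (\<forall>z\<in>\<Omega>. - laplacian (u q) z = \<bar>u q z\<bar> powr (q - 1) * u q z)
               \<and> (\<forall>z\<in>frontier \<Omega>. u q z = 0)"
    and sym: "\<And>q z. q > 1 \<Longrightarrow> z \<in> \<Omega> \<Longrightarrow> u q (cis (2 * pi / real k) * z) = u q z"
    and sgn: "\<And>q. q > 1 \<Longrightarrow> (\<exists>z\<in>\<Omega>. u q z > 0) \<and> (\<exists>z\<in>\<Omega>. u q z < 0)"
    and nodal: "\<And>q. q > 1 \<Longrightarrow> card (components {z\<in>\<Omega>. u q z \<noteq> 0}) = 2"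
    and NLbd: "\<And>q. q > 1 \<Longrightarrow> closure {z\<in>\<Omega>. u q z = 0} \<inter> frontier \<Omega> = {}"
    and NL0: "\<And>q. q > 1 \<Longrightarrow> 0 \<notin> {z\<in>\<Omega>. u q z = 0}"
    and energy: "\<exists>\<alpha> < 5. \<exists>P. \<forall>q\<ge>P. q > 1 \<longrightarrow>
               grad_sq (u q) integrable_on \<Omega> \<and>
               q * integral \<Omega> (grad_sq (u q)) \<le> \<alpha> * 8 * pi * exp 1"
    and supn: "\<And>q. q > 1 \<Longrightarrow> (SUP z\<in>\<Omega>. \<bar>u q z\<bar>) = (SUP z\<in>\<Omega>. max (u q z) 0)"
    and pseq: "\<And>n. p n > 1" "filterlim p at_top sequentially"
    and xin: "\<And>n. x n \<in> \<Omega>"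
    and mu_def: "\<And>n. \<mu> n = 1 / sqrt (p n * \<bar>u (p n) (x n)\<bar> powr (p n - 1))"
    and blowup: "filterlim (\<lambda>n. p n * \<bar>u (p n) (x n)\<bar> powr (p n - 1)) at_top sequentially"
    and v_def: "\<And>n z. v n z = p n / u (p n) (x n) * (u (p n) (x n + of_real (\<mu> n) * z) - u (p n) (x n))"
    and xconv: "(\<lambda>n. x n / of_real (\<mu> n)) \<longlonglongrightarrow> L"
    and conv: "C1loc_conv v (\<lambda>n. {z. x n + of_real (\<mu> n) * z \<in> \<Omega>}) Ububble (- {- L})"
  shows "(\<lambda>n. cmod (x n) / \<mu> n) \<longlonglongrightarrow> 0
       \<and> C1loc_conv v (\<lambda>n. {z. x n + of_real (\<mu> n) * z \<in> \<Omega>}) Ububble (- {0})"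
proof -
  define c where "c = cis (2 * pi / real k)"
  define w where "w n = (c - 1) * (x n / of_real (\<mu> n))" for n
  have k2: "real k > 1" using grp exp_gt_one[of 1] by linarith
  have c1: "c \<noteq> 1"
  proof
    assume "c = 1"
    hence "Re c = 1" by simp
    hence "cos (2 * pi / real k) = 1" by (simp add: c_def)
    then obtain i :: int where "2 * pi / real k = 2 * pi * i"
      using cos_one_2pi_int by (metis mult.commute mult.assoc)
    hence "(2*pi) * (1 / real k) = (2*pi) * i" by simp
    hence "1 / real k = i" using pi_gt_zero by (metis mult_cancel_left pi_neq_zero zero_neq_numeral mult_eq_0_iff)
    moreover have "0 < 1 / real k" "1 / real k < 1" using k2 by auto
    ultimately show False proof -
      assume h: "1 / real k = i" "0 < 1 / real k" "1 / real k < 1"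
      hence "0 < i" "i < 1" by simp_all
      thus False by simp
    qed
  qed
  have vw: "v n (w n) = 0" for n
  proof (cases "\<mu> n = 0")
    case True thus ?thesis by (simp add: w_def v_def)
  next
    case False
    have "x n + of_real (\<mu> n) * w n = c * x n"
      using False by (simp add: w_def field_simps)
    moreover have "u (p n) (c * x n) = u (p n) (x n)"
      using sym[OF pseq(1) xin] by (simp add: c_def)
    ultimately show ?thesis by (simp add: v_def)
  qed
  have wlim: "w \<longlonglongrightarrow> (c - 1) * L"
    unfolding w_def by (intro tendsto_intros xconv)
  have pos: "1 + (cmod z)\<^sup>2 / 8 \<noteq> 0" for z
  proof -
    have "(cmod z)\<^sup>2 / 8 \<ge> 0" by simp
    thus ?thesis by linarith
  qed
  have Ucont: "continuous_on UNIV Ububble"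
    unfolding Ububble_def
    by (intro continuous_intros) (use pos in auto)
  have L0: "L = 0"
  proof (rule ccontr)
    assume Lne: "L \<noteq> 0"
    define w0 where "w0 = (c - 1) * L"
    have w0ne: "w0 \<noteq> 0" using Lne c1 by (simp add: w0_def)
    have w0L: "w0 + L \<noteq> 0"
    proof
      assume "w0 + L = 0"
      hence "c * L = 0" by (simp add: w0_def algebra_simps)
      thus False using Lne by (simp add: c_def)
    qed
    define r where "r = cmod (w0 + L) / 2"
    have r: "r > 0" using w0L by (simp add: r_def)
    have K: "compact (cball w0 r)" "cball w0 r \<subseteq> - {- L}"
      using r by (auto simp: r_def dist_norm norm_minus_commute)
    have ev: "\<forall>e>0. \<forall>\<^sub>F n in sequentially. \<forall>z\<in>cball w0 r. \<bar>v n z - Ububble z\<bar> < e"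
    proof (intro allI impI)
      fix e :: real assume e: "e > 0"
      have "\<forall>\<^sub>F n in sequentially. \<forall>z\<in>cball w0 r.
            \<bar>v n z - Ububble z\<bar> < e \<and>
            onorm (\<lambda>h. frechet_derivative (v n) (at z) h - frechet_derivative Ububble (at z) h) < e"
        using conv K e unfolding C1loc_conv_def by blast
      thus "\<forall>\<^sub>F n in sequentially. \<forall>z\<in>cball w0 r. \<bar>v n z - Ububble z\<bar> < e"
        by (rule eventually_mono) blast
    qed
    have inK: "\<forall>\<^sub>F n in sequentially. w n \<in> cball w0 r"
    proof -
      have "\<forall>\<^sub>F n in sequentially. dist (w n) w0 < r"
        using wlim r unfolding w0_def tendsto_iff by blast
      thus ?thesis by (rule eventually_mono) (simp add: dist_commute)
    qed
    have "(\<lambda>n. Ububble (w n)) \<longlonglongrightarrow> 0"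
    proof (rule LIMSEQ_I)
      fix e :: real assume e: "e > 0"
      have "\<forall>\<^sub>F n in sequentially. norm (Ububble (w n) - 0) < e"
        using eventually_conj[OF inK ev[rule_format, OF e]]
        proof (rule eventually_mono)
        fix n assume "w n \<in> cball w0 r \<and> (\<forall>z\<in>cball w0 r. \<bar>v n z - Ububble z\<bar> < e)"
        hence "\<bar>v n (w n) - Ububble (w n)\<bar> < e" by blast
        thus "norm (Ububble (w n) - 0) < e" using vw[of n] by simp
      qed
      thus "\<exists>no. \<forall>n\<ge>no. norm (Ububble (w n) - 0) < e"
        by (simp add: eventually_sequentially)
    qed
    moreover have "(\<lambda>n. Ububble (w n)) \<longlonglongrightarrow> Ububble w0"
    proof -
      have "isCont Ububble w0" using Ucont by (simp add: continuous_on_eq_continuous_at)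
      thus ?thesis using wlim unfolding w0_def by (rule isCont_tendsto_compose)
    qed
    ultimately have U0: "Ububble w0 = 0" using LIMSEQ_unique by blast
    define a where "a = (cmod w0)^2 / 8"
    have a: "a > 0" using w0ne by (simp add: a_def)
    have "(1 / (1 + a))^2 < 1" using a
      by (simp add: power_less_one_iff)
    moreover have "(1 / (1 + a))^2 > 0" using a by simp
    ultimately have "ln ((1 / (1 + a))^2) < 0" by simp
    thus False using U0 by (simp add: Ububble_def a_def)
  qed
  have mu0: "\<mu> n \<ge> 0" for n using mu_def[of n] pseq(1)[of n] by simp
  have "(\<lambda>n. cmod (x n / of_real (\<mu> n))) \<longlonglongrightarrow> cmod L"
    by (intro tendsto_intros xconv)
  moreover have "cmod (x n / of_real (\<mu> n)) = cmod (x n) / \<mu> n" for n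
    using mu0[of n] by (simp add: norm_divide)
  ultimately have "(\<lambda>n. cmod (x n) / \<mu> n) \<longlonglongrightarrow> 0" using L0 by simp
  thus ?thesis using conv L0 by simp
qed

end
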